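(* Let $1\le d<n$, $r=d(n-d)$, and let $\mathfrak C:\underline i_r>\underline i_{r-1}>\cdots>\underline i_0$ be a maximal chain in $I(d,n)$. Then there exists $0\le k<r$ such that $\underline i_h$ does not contain $n$ for all $h\le k$ and $\underline i_h$ contains $n$ for all $h>k$. Moreover, if $\underline i_k=i_{1,k}i_{2,k}\cdots i_{d,k}$, then $i_{d,k}=n-1$ and $\underline i_{k+1}=i_{1,k}\cdots i_{d-1,k}\,n$.
   Context: $I(d,n)$ is the set of $d$-element subsets of $\{1,\dots,n\}$, written as increasing sequences $i_1i_2\cdots i_d$, partially ordered by $\underline i\le \underline j$ iff $i_k\le j_k$ for all $k$. A maximal chain is a totally ordered subset maximal with respect to inclusion; it has the form $\underline i_r>\cdots>\underline i_0$ with $\underline i_0=12\cdots d$, $\underline i_r=(n-d+1)\cdots n$, each relation a cover. *)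

theory Defs
  imports Main
begin

text \<open>I(d,n): d-element subsets of {1..n}, viewed as increasing sequences.\<close>
definition Idn :: "nat \<Rightarrow> nat \<Rightarrow> nat set set" where
  "Idn d n = {A. A \<subseteq> {1..n} \<and> card A = d}"

definition idx_le :: "nat set \<Rightarrow> nat set \<Rightarrow> bool" where
  "idx_le A B = list_all2 (\<le>) (sorted_list_of_set A) (sorted_list_of_set B)"

definition idx_lt :: "nat set \<Rightarrow> nat set \<Rightarrow> bool" where
  "idx_lt A B = (idx_le A B \<and> A \<noteq> B)"

definition is_chain_in :: "nat \<Rightarrow> nat \<Rightarrow> nat set set \<Rightarrow> bool" where
  "is_chain_in d n C = (C \<subseteq> Idn d n \<and> (\<forall>A\<in>C. \<forall>B\<in>C. idx_le A B \<or> idx_le B A))"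

definition is_maximal_chain :: "nat \<Rightarrow> nat \<Rightarrow> nat set set \<Rightarrow> bool" where
  "is_maximal_chain d n C = (is_chain_in d n C \<and>
     (\<forall>C'. is_chain_in d n C' \<and> C \<subseteq> C' \<longrightarrow> C' = C))"

end

theory Submission
  imports Defs
begin

lemma sorted_last_ge: "sorted xs \<Longrightarrow> x \<in> set xs \<Longrightarrow> (x::nat) \<le> last xs"
  by (induction xs) (auto simp: last_in_set)

lemma la2_sum_le: "list_all2 (\<le>) xs ys \<Longrightarrow> sum_list (xs::nat list) \<le> sum_list ys"
  by (induction rule: list_all2_induct) auto

lemma la2_sum_eq: "list_all2 (\<le>) xs ys \<Longrightarrow> sum_list (xs::nat list) = sum_list ys \<Longrightarrow> xs = ys"
proof (induction rule: list_all2_induct)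
  case Nil then show ?case by simp
next
  case (Cons x xs y ys)
  have "sum_list xs \<le> sum_list ys" using Cons.hyps(2) by (rule la2_sum_le)
  with Cons show ?case by auto
qed

lemma la2_last: "list_all2 P xs ys \<Longrightarrow> xs \<noteq> [] \<Longrightarrow> P (last xs) (last ys)"
proof -
  assume a: "list_all2 P xs ys" "xs \<noteq> []"
  then have "length xs = length ys" "ys \<noteq> []" using list_all2_lengthD by force+
  with a show ?thesis by (auto simp: list_all2_conv_all_nth last_conv_nth)
qed

lemma last_step:
  fixes xs ys :: "nat list"
  assumes "list_all2 (\<le>) xs ys" "sum_list ys = sum_list xs + 1" "xs \<noteq> []" "last xs < last ys"
  shows "butlast ys = butlast xs \<and> last ys = Suc (last xs)"
proof -
  have len: "length xs = length ys" using assms(1) list_all2_lengthD by blast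
  have "ys \<noteq> []" using len assms(3) by auto
  obtain xs' a where xa: "xs = xs' @ [a]" using assms(3) by (metis append_butlast_last_id)
  obtain ys' b where yb: "ys = ys' @ [b]" using \<open>ys \<noteq> []\<close> by (metis append_butlast_last_id)
  have l': "length xs' = length ys'" using len xa yb by simp
  have "list_all2 (\<le>) xs' ys'" using assms(1) xa yb list_all2_append[OF l'] by simp
  then have le: "sum_list xs' \<le> sum_list ys'" by (rule la2_sum_le)
  have ab: "a < b" using assms(4) xa yb by simp
  have "sum_list ys' + b = sum_list xs' + a + 1" using assms(2) xa yb by simp
  then have "sum_list ys' = sum_list xs'" "b = Suc a" using le ab by linarith+
  with \<open>list_all2 (\<le>) xs' ys'\<close> have "xs' = ys'" using la2_sum_eq by metis
  then show ?thesis using xa yb \<open>b = Suc a\<close> by simp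
qed

lemma sum_lower: "finite A \<Longrightarrow> 0 \<notin> A \<Longrightarrow> card A = d \<Longrightarrow> d*(d+1) \<le> 2*\<Sum>A"
proof (induction d arbitrary: A)
  case 0 then show ?case by simp
next
  case (Suc d)
  have ne: "A \<noteq> {}" using Suc.prems by auto
  define m where "m = Max A"
  have mA: "m \<in> A" using Suc.prems(1) ne m_def by simp
  have sub: "A \<subseteq> {1..m}"
  proof
    fix y assume y: "y \<in> A"
    then have "y \<le> m" using m_def Suc.prems(1) by simp
    moreover have "y \<noteq> 0" using y Suc.prems(2) by metis
    ultimately show "y \<in> {1..m}" by simp
  qed
  then have "card A \<le> card {1..m}" by (intro card_mono) auto
  then have dm: "Suc d \<le> m" using Suc.prems by simp
  have f1: "finite (A-{m})" "0 \<notin> A-{m}" "card (A-{m}) = d"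
    using Suc.prems mA by auto
  have ih: "d*(d+1) \<le> 2*\<Sum>(A-{m})" using Suc.IH[OF f1] .
  have s: "\<Sum>A = m + \<Sum>(A-{m})" by (rule sum.remove[OF Suc.prems(1) mA])
  have e: "Suc d * (Suc d + 1) = d*(d+1) + 2 * Suc d" by simp
  show ?case unfolding e s using ih dm by simp
qed

lemma sum_upper: "A \<subseteq> {1..m} \<Longrightarrow> card A = d \<Longrightarrow> 2*\<Sum>A + d*d \<le> d*(2*m+1)"
proof (induction d arbitrary: A m)
  case 0
  then have "finite A" using finite_subset by blast
  with 0 have "A = {}" by simp
  then show ?case by simp
next
  case (Suc d)
  have fin: "finite A" using Suc.prems(1) finite_subset by blast
  have ne: "A \<noteq> {}" using Suc.prems by auto
  define x where "x = Max A"
  have xA: "x \<in> A" using fin ne x_def by simp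
  have xI: "x \<in> {1..m}" using xA Suc.prems(1) by (rule subsetD[rotated])
  have xm: "x \<le> m" using xI by simp
  obtain x' where x': "x = Suc x'" using xI by (cases x) auto
  have sub: "A - {x} \<subseteq> {1..x'}"
  proof
    fix y assume y: "y \<in> A - {x}"
    then have "y \<le> x" using x_def fin by simp
    moreover have "y \<noteq> x" using y by simp
    moreover have "1 \<le> y" using y Suc.prems(1) by force
    ultimately show "y \<in> {1..x'}" using x' by simp
  qed
  have cd: "card (A - {x}) = d" using Suc.prems(2) fin xA by simp
  have IH: "2*\<Sum>(A-{x}) + d*d \<le> d*(2*x'+1)" using Suc.IH[OF sub cd] .
  have s: "\<Sum>A = x + \<Sum>(A-{x})" by (rule sum.remove[OF fin xA])
  have dx: "d*x' + d \<le> d*m" using mult_le_mono2[OF xm, of d] x' by simp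
  have e1: "Suc d * Suc d = d*d + 2*d + 1" by simp
  have e2: "Suc d * (2*m+1) = 2*(d*m) + 2*m + d + 1" by (simp add: algebra_simps)
  have e3: "d*(2*x'+1) = 2*(d*x') + d" by (simp add: algebra_simps)
  show ?case unfolding e1 e2 s using IH e3 dx xm x' by simp
qed

lemma sum_list_L: "finite A \<Longrightarrow> sum_list (sorted_list_of_set A) = \<Sum>A"
  by (metis distinct_sorted_list_of_set set_sorted_list_of_set sum.distinct_set_conv_list map_ident)

theorem proposition2p8:
  fixes d n r :: nat and ch :: "nat \<Rightarrow> nat set"
  assumes "1 \<le> d" and "d < n" and "r = d * (n - d)"
    and "is_maximal_chain d n (ch ` {0..r})"
    and "\<forall>h<r. idx_lt (ch h) (ch (Suc h))"
  shows "\<exists>k<r. (\<forall>h\<le>k. n \<notin> ch h) \<and> (\<forall>h. k < h \<and> h \<le> r \<longrightarrow> n \<in> ch h) \<and>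
           sorted_list_of_set (ch k) ! (d - 1) = n - 1 \<and>
           ch (Suc k) = set (butlast (sorted_list_of_set (ch k))) \<union> {n}"
proof -
  have CI: "ch ` {0..r} \<subseteq> Idn d n"
    using conjunct1[OF conjunct1[OF assms(4)[unfolded is_maximal_chain_def is_chain_in_def]]] .
  have C: "\<And>h. h \<le> r \<Longrightarrow> ch h \<subseteq> {1..n} \<and> card (ch h) = d"
  proof -
    fix h assume "h \<le> r"
    then have "ch h \<in> Idn d n" using CI by auto
    then show "ch h \<subseteq> {1..n} \<and> card (ch h) = d" unfolding Idn_def by simp
  qed
  have fin: "\<And>h. h \<le> r \<Longrightarrow> finite (ch h)" using C finite_subset by blast
  define L where "L h = sorted_list_of_set (ch h)" for h
  define s where "s h = \<Sum>(ch h)" for h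
  have sL: "\<And>h. h \<le> r \<Longrightarrow> sum_list (L h) = s h" unfolding L_def s_def by (rule sum_list_L[OF fin])
  have setL: "\<And>h. h \<le> r \<Longrightarrow> set (L h) = ch h" using fin L_def by simp
  have lenL: "\<And>h. h \<le> r \<Longrightarrow> length (L h) = d" using C L_def by simp
  have la: "\<And>h. h < r \<Longrightarrow> list_all2 (\<le>) (L h) (L (Suc h))"
    using assms(5) L_def unfolding idx_lt_def idx_le_def by auto
  have step: "\<And>h. h < r \<Longrightarrow> s h < s (Suc h)"
  proof -
    fix h assume h: "h < r"
    have "L h \<noteq> L (Suc h)"
      using assms(5) h setL[of h] setL[of "Suc h"] unfolding idx_lt_def by force
    then have "sum_list (L h) \<noteq> sum_list (L (Suc h))" using la[OF h] la2_sum_eq by blast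
    then show "s h < s (Suc h)" using la2_sum_le[OF la[OF h]] sL[of h] sL[of "Suc h"] h by simp
  qed
  have grow: "\<And>j h. h + j \<le> r \<Longrightarrow> s h + j \<le> s (h+j)"
  proof -
    fix j h show "h + j \<le> r \<Longrightarrow> s h + j \<le> s (h+j)"
    proof (induction j)
      case 0 then show ?case by simp
    next
      case (Suc j)
      then have "s h + j \<le> s (h+j)" by simp
      moreover have "s (h+j) < s (Suc (h+j))" using step Suc.prems by simp
      ultimately show ?case by simp
    qed
  qed
  have C0: "ch 0 \<subseteq> {1..n}" "card (ch 0) = d" using C[of 0] by auto
  have fin0: "finite (ch 0)" using fin[of 0] by simp
  have z0: "0 \<notin> ch 0" using C[of 0] by auto
  have lo0: "d*(d+1) \<le> 2*s 0" unfolding s_def using sum_lower[OF fin[of 0] z0] C[of 0] by simp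
  have hir: "2*s r + d*d \<le> d*(2*n+1)" using sum_upper[of "ch r" n d] C[of r] s_def by auto
  have g0: "s 0 + r \<le> s r" using grow[of 0 r] by simp
  have dn: "d*n = r + d*d" using assms(2,3) by (simp add: diff_mult_distrib2)
  have e1: "d*(d+1) = d*d + d" by simp
  have e2: "d*(2*n+1) = 2*(d*n) + d" by (simp add: algebra_simps)
  have s0: "2 * s 0 = d*(d+1)" using lo0 hir g0 dn unfolding e1 e2 by linarith
  have sr: "s r = s 0 + r" using lo0 hir g0 dn unfolding e1 e2 by linarith
  have unit: "\<And>h. h < r \<Longrightarrow> s (Suc h) = s h + 1"
  proof -
    fix h assume h: "h < r"
    have "s 0 + h \<le> s h" using grow[of 0 h] h by simp
    moreover have "s (Suc h) + (r - Suc h) \<le> s r" using grow[of "Suc h" "r - Suc h"] h by simp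
    ultimately show "s (Suc h) = s h + 1" using step[OF h] sr h by linarith
  qed
  have n0: "n \<notin> ch 0"
  proof
    assume nin: "n \<in> ch 0"
    obtain d' where d': "d = Suc d'" using assms(1) by (cases d) auto
    have "d'*(d'+1) \<le> 2*\<Sum>(ch 0 - {n})"
      using sum_lower[of "ch 0 - {n}" d'] C0 fin0 nin d' z0 by simp
    moreover have "s 0 = n + \<Sum>(ch 0 - {n})" unfolding s_def by (rule sum.remove[OF fin0 nin])
    moreover have "d * (d + 1) = d'*(d'+1) + 2*d' + 2" using d' by simp
    ultimately show False using s0 d' assms(2) by linarith
  qed
  have nr: "n \<in> ch r"
  proof (rule ccontr)
    assume nin: "n \<notin> ch r"
    obtain n' where n': "n = Suc n'" using assms(2) by (cases n) auto
    have "ch r \<subseteq> {1..n'}" using C[of r] nin n' by (auto simp: le_Suc_eq)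
    then have "2*s r + d*d \<le> d*(2*n'+1)" using sum_upper[of "ch r" n' d] C[of r] s_def by auto
    moreover have "d*(2*n'+1) = 2*(d*n') + d" by (simp add: algebra_simps)
    moreover have "d*n = d*n' + d" using n' by simp
    ultimately show False using s0 sr dn e1 assms(1) by linarith
  qed
  have mono: "\<And>h. h < r \<Longrightarrow> n \<in> ch h \<Longrightarrow> n \<in> ch (Suc h)"
  proof -
    fix h assume h: "h < r" and nh: "n \<in> ch h"
    have ne: "L h \<noteq> []" using lenL[of h] h assms(1) by auto
    have "n \<le> last (L h)" using sorted_last_ge[of "L h" n] nh setL[of h] h L_def by simp
    also have "\<dots> \<le> last (L (Suc h))" using la2_last[OF la[OF h] ne] .
    finally have "n \<le> last (L (Suc h))" .
    moreover have "last (L (Suc h)) \<in> ch (Suc h)"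
      using ne lenL[of h] lenL[of "Suc h"] h setL[of "Suc h"] last_in_set by (metis Suc_leI length_0_conv less_imp_le_nat)
    ultimately show "n \<in> ch (Suc h)" using C[of "Suc h"] h by (metis Suc_leI atLeastAtMost_iff le_antisym subsetD)
  qed
  define m where "m = (LEAST h. n \<in> ch h)"
  have mr: "m \<le> r" using nr m_def Least_le by metis
  have nm: "n \<in> ch m" using nr m_def by (metis LeastI)
  have m0: "m \<noteq> 0" using nm n0 by metis
  obtain k where k: "m = Suc k" using m0 by (cases m) auto
  have kr: "k < r" using k mr by simp
  have before: "\<forall>h\<le>k. n \<notin> ch h" using k m_def not_less_Least by (metis le_imp_less_Suc)
  have after: "\<forall>h. k < h \<and> h \<le> r \<longrightarrow> n \<in> ch h"
  proof -
    have "\<And>j. m + j \<le> r \<Longrightarrow> n \<in> ch (m + j)"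
    proof -
      fix j show "m + j \<le> r \<Longrightarrow> n \<in> ch (m + j)"
        by (induction j) (use nm mono in auto)
    qed
    then show ?thesis using k by (metis Suc_leI le_add_diff_inverse)
  qed
  have ne: "L k \<noteq> []" using lenL[of k] kr assms(1) by auto
  have lk: "last (L k) < n"
  proof -
    have "last (L k) \<in> ch k" using ne setL[of k] kr last_in_set by fastforce
    then show ?thesis using C[of k] kr before by (metis atLeastAtMost_iff le_neq_implies_less order_refl subsetD less_imp_le_nat)
  qed
  have lsk: "last (L (Suc k)) = n"
  proof -
    have ne': "L (Suc k) \<noteq> []" using lenL[of "Suc k"] kr assms(1) by auto
    have "last (L (Suc k)) \<in> ch (Suc k)" using ne' setL[of "Suc k"] kr last_in_set by (metis Suc_leI)
    then have "last (L (Suc k)) \<le> n" using C[of "Suc k"] kr by auto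
    moreover have "n \<le> last (L (Suc k))" using sorted_last_ge[of "L (Suc k)" n] nm k setL[of "Suc k"] kr L_def by simp
    ultimately show ?thesis by simp
  qed
  have "sum_list (L (Suc k)) = sum_list (L k) + 1" using unit[OF kr] sL[of k] sL[of "Suc k"] kr by simp
  then have ls: "butlast (L (Suc k)) = butlast (L k) \<and> last (L (Suc k)) = Suc (last (L k))"
    using last_step[OF la[OF kr]] ne lk lsk by simp
  have nth: "L k ! (d - 1) = n - 1" using ls lsk ne lenL[of k] kr by (simp add: last_conv_nth)
  have "ch (Suc k) = set (butlast (L (Suc k)) @ [last (L (Suc k))])"
    using setL[of "Suc k"] kr ls lenL[of "Suc k"] assms(1)
    by (metis Suc_leI append_butlast_last_id length_0_conv not_one_le_zero)
  then have "ch (Suc k) = set (butlast (L k)) \<union> {n}" using ls lsk by simp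
  then have fin: "ch (Suc k) = set (butlast (sorted_list_of_set (ch k))) \<union> {n}" unfolding L_def .
  have nth': "sorted_list_of_set (ch k) ! (d - 1) = n - 1" using nth unfolding L_def .
  show ?thesis by (rule exI[of _ k]) (use kr before after nth' fin in blast)
qed

end
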